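(* Let $P=MN_P$ be a standard parabolic subgroup of $G$, $\pi\in\Pi_{\mathrm{disc}}(M)$, let $Q\subset R$ be standard parabolic subgroups of $G$ and let $w\in{}_QW_P$ with $P_\pi\subset P_w$. Then for every $\gamma^\vee\in\Delta_R^\vee\cap w\mathfrak a_0^P$ we have $\langle w\nu^P_{P_w},\gamma^\vee\rangle<0$.
   Context: $F$ is a number field, $G=\mathrm{GL}_n$ over $F$, $P_0$ the upper triangular Borel, $W\cong\mathfrak S_n$ the Weyl group, $\mathfrak a_0=\mathbb R^n$ with standard inner product, identified with its dual. For standard $S$: $\mathfrak a_S\subset\mathfrak a_0$, $\mathfrak a_0^S$ is the orthogonal complement of $\mathfrak a_S$ (kernel of the projection $\mathfrak a_0\to\mathfrak a_S$), $\Delta_S^\vee$ the set of simple coroots of $S$ (projections to $\mathfrak a_S$ of the coroots of simple roots of $P_0$ not in $M_S$), $\rho_S^{S'}$ for $S\subset S'$ the half-sum of roots of $A_S$ in $M_{S'}\cap N_S$. ${}_QW_P$ is the set of $w\in W$ with $M_P\cap w^{-1}P_0w=M_P\cap P_0$ and $M_Q\cap wP_0w^{-1}=M_Q\cap P_0$; $P_w=(M_P\cap w^{-1}Qw)N_P$. $\Pi_{\mathrm{disc}}(M)$ is the set of discrete automorphic representations of $M(\mathbb A)$ with central character trivial on $A_M^\infty$. Write $M=G_{n_1}\times\dots\times G_{n_k}$, $\pi=\boxtimes_i\pi_i$; by Moeglin–Waldspurger there are integers $r_i,d_i$ with $n_i=r_id_i$ and cuspidal $\sigma_i$ of $\mathrm{GL}_{r_i}$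 with $\pi_i$ the residual representation attached to $\sigma_i^{\otimes d_i}$; $P_\pi\subset P$ is the standard parabolic with $P_\pi\cap M=\prod P_{\pi_i}$, $P_{\pi_i}$ standard in $\mathrm{GL}_{n_i}$ with Levi $\mathrm{GL}_{r_i}^{d_i}$. For $P_\pi\subset S\subset P$ with $S\cap M=\prod S_i$, $\nu^P_S=(-\rho^{\mathrm{GL}_{n_i}}_{S_i}/r_i)_i\in\mathfrak a_S^{P,*}$. *)

theory Defs
  imports Complex_Main "HOL-Combinatorics.Permutations"
begin

(* Coordinates of a_0 = R^n are indexed by {0..<n}; vectors are nat => real
   (only values on {..<n} matter). A standard parabolic of GL_n is encoded by the
   composition (n_1,...,n_k) of n giving the block sizes of its standard Levi. *)

definition is_comp :: "nat \<Rightarrow> nat list \<Rightarrow> bool" where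
  "is_comp n ns \<longleftrightarrow> (\<forall>m\<in>set ns. 0 < m) \<and> sum_list ns = n"

definition cuts :: "nat list \<Rightarrow> nat set" where
  "cuts ns = (\<lambda>j. sum_list (take j ns)) ` {1..<length ns}"

(* index of the block containing position a *)
definition blk :: "nat list \<Rightarrow> nat \<Rightarrow> nat" where
  "blk ns a = card {c \<in> cuts ns. c \<le> a}"

definition blkrel :: "nat list \<Rightarrow> nat \<Rightarrow> nat \<Rightarrow> bool" where
  "blkrel ns a b \<longleftrightarrow> blk ns a = blk ns b"

(* containment S \<subseteq> S' of standard parabolics, given by their block relations *)
definition psub :: "nat \<Rightarrow> (nat \<Rightarrow> nat \<Rightarrow> bool) \<Rightarrow> (nat \<Rightarrow> nat \<Rightarrow> bool) \<Rightarrow> bool" where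
  "psub n S S' \<longleftrightarrow> (\<forall>a<n. \<forall>b<n. S a b \<longrightarrow> S' a b)"

(* w acts on a_0 by e_i \<mapsto> e_(w i) *)
definition wact :: "(nat \<Rightarrow> nat) \<Rightarrow> (nat \<Rightarrow> real) \<Rightarrow> nat \<Rightarrow> real" where
  "wact w v = (\<lambda>c. v (inv w c))"

definition in_QWP :: "nat \<Rightarrow> nat list \<Rightarrow> nat list \<Rightarrow> (nat \<Rightarrow> nat) \<Rightarrow> bool" where
  "in_QWP n Q P w \<longleftrightarrow> w permutes {..<n}
     \<and> (\<forall>a<n. \<forall>b<n. a < b \<and> blkrel P a b \<longrightarrow> w a < w b)
     \<and> (\<forall>a<n. \<forall>b<n. a < b \<and> blkrel Q a b \<longrightarrow> inv w a < inv w b)"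

(* block relation of P_w = (M_P \<inter> w^-1 Q w) N_P, Levi M_P \<inter> w^-1 M_Q w *)
definition Pw_rel :: "nat list \<Rightarrow> nat list \<Rightarrow> (nat \<Rightarrow> nat) \<Rightarrow> nat \<Rightarrow> nat \<Rightarrow> bool" where
  "Pw_rel P Q w = (\<lambda>a b. blkrel P a b \<and> blkrel Q (w a) (w b))"

(* composition of P_pi: block i of P (size r_i d_i) split into d_i blocks of size r_i *)
definition Ppi_comp :: "nat list \<Rightarrow> nat list \<Rightarrow> nat list" where
  "Ppi_comp rs ds = concat (map2 (\<lambda>r d. replicate d r) rs ds)"

(* orthogonal projection a_0 \<rightarrow> a_S (averaging over the blocks of S) *)
definition proj :: "nat \<Rightarrow> (nat \<Rightarrow> nat \<Rightarrow> bool) \<Rightarrow> (nat \<Rightarrow> real) \<Rightarrow> nat \<Rightarrow> real" where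
  "proj n S v = (\<lambda>x. (\<Sum>y\<in>{y. y < n \<and> S x y}. v y) / real (card {y. y < n \<and> S x y}))"

(* rho_S^{S'}: half-sum of the roots of A_S in M_{S'} \<inter> N_S,
   i.e. projection to a_S of half the sum of e_x - e_y over x<y in the same
   S'-block and different S-blocks *)
definition rho :: "nat \<Rightarrow> (nat \<Rightarrow> nat \<Rightarrow> bool) \<Rightarrow> (nat \<Rightarrow> nat \<Rightarrow> bool) \<Rightarrow> nat \<Rightarrow> real" where
  "rho n S S' = proj n S (\<lambda>c. (1/2) * (\<Sum>(x,y)\<in>{(x,y). x < y \<and> y < n \<and> S' x y \<and> \<not> S x y}.
        (if c = x then 1 else 0) - (if c = y then 1 else 0)))"

definition nu :: "nat \<Rightarrow> nat list \<Rightarrow> nat list \<Rightarrow> (nat \<Rightarrow> nat \<Rightarrow> bool) \<Rightarrow> nat \<Rightarrow> real" where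
  "nu n P rs S = (\<lambda>a. - rho n S (blkrel P) a / real (rs ! blk P a))"

(* simple coroot of R at the block boundary between c-1 and c (c \<in> cuts R):
   projection to a_R of e_(c-1) - e_c *)
definition coroot :: "nat \<Rightarrow> nat list \<Rightarrow> nat \<Rightarrow> nat \<Rightarrow> real" where
  "coroot n R c = proj n (blkrel R) (\<lambda>x. (if x = c - 1 then 1 else 0) - (if x = c then 1 else 0))"

definition simple_coroots :: "nat \<Rightarrow> nat list \<Rightarrow> (nat \<Rightarrow> real) set" where
  "simple_coroots n R = coroot n R ` cuts R"

(* membership in w a_0^P, where a_0^P = kernel of the projection to a_P *)
definition in_w_a0P :: "nat \<Rightarrow> nat list \<Rightarrow> (nat \<Rightarrow> nat) \<Rightarrow> (nat \<Rightarrow> real) \<Rightarrow> bool" where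
  "in_w_a0P n P w g \<longleftrightarrow> (\<exists>x. (\<forall>a<n. proj n (blkrel P) x a = 0) \<and> (\<forall>c<n. g c = wact w x c))"

definition pairing :: "nat \<Rightarrow> (nat \<Rightarrow> real) \<Rightarrow> (nat \<Rightarrow> real) \<Rightarrow> real" where
  "pairing n u v = (\<Sum>c<n. u c * v c)"

end

theory Submission imports Defs begin

lemma block_pos:
  fixes J :: "nat set" and h r :: "nat \<Rightarrow> real"
  assumes fin: "finite J" and s0: "(\<Sum>a\<in>J. h a) = 0"
    and ord: "\<forall>a\<in>J. \<forall>b\<in>J. h a > 0 \<longrightarrow> h b < 0 \<longrightarrow> r b < r a"
    and nz: "\<exists>a\<in>J. h a \<noteq> 0"
  shows "0 < (\<Sum>a\<in>J. r a * h a)"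
proof -
  have exp: "\<exists>a\<in>J. h a > 0"
  proof (rule ccontr)
    assume "\<not> ?thesis"
    hence le: "\<forall>a\<in>J. h a \<le> 0" by auto
    have "(\<Sum>a\<in>J. - h a) = 0" using s0 by (simp add: sum_negf)
    hence "\<forall>a\<in>J. - h a = 0" using sum_nonneg_eq_0_iff[OF fin, of "\<lambda>a. - h a"] le by auto
    thus False using nz by auto
  qed
  define Ps where "Ps = {a\<in>J. h a > 0}"
  have Psne: "Ps \<noteq> {}" and Psf: "finite Ps" using exp fin by (auto simp: Ps_def)
  define t where "t = Min (r ` Ps)"
  have tle: "\<forall>a\<in>Ps. t \<le> r a" using Psf by (auto simp: t_def)
  have "t \<in> r ` Ps" using Min_in[of "r ` Ps"] Psne Psf by (simp add: t_def)
  then obtain a1 where a1: "a1 \<in> Ps" "r a1 = t" by auto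
  have exn: "\<exists>b\<in>J. h b < 0"
  proof (rule ccontr)
    assume "\<not> ?thesis"
    hence le: "\<forall>a\<in>J. 0 \<le> h a" by auto
    hence "\<forall>a\<in>J. h a = 0" using sum_nonneg_eq_0_iff[OF fin, of h] s0 by auto
    thus False using exp by auto
  qed
  have neg: "\<forall>b\<in>J. h b < 0 \<longrightarrow> r b < t" using ord a1 by (auto simp: Ps_def)
  have "(\<Sum>a\<in>J. t * h a) < (\<Sum>a\<in>J. r a * h a)"
  proof (rule sum_strict_mono_ex1[OF fin])
    show "\<forall>x\<in>J. t * h x \<le> r x * h x"
    proof
      fix x assume x: "x \<in> J"
      consider "h x > 0" | "h x = 0" | "h x < 0" by linarith
      thus "t * h x \<le> r x * h x"
      proof cases
        case 1 thus ?thesis using tle x by (auto simp: Ps_def intro: mult_right_mono)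
      next
        case 2 thus ?thesis by simp
      next
        case 3 thus ?thesis using neg x by (auto intro: mult_right_mono_neg)
      qed
    qed
    show "\<exists>a\<in>J. t * h a < r a * h a"
      using exn neg by (auto intro: mult_strict_right_mono_neg)
  qed
  moreover have "(\<Sum>a\<in>J. t * h a) = 0" using s0 by (simp add: sum_distrib_left[symmetric])
  ultimately show ?thesis by simp
qed

lemma block_nonneg:
  fixes J :: "nat set" and h r :: "nat \<Rightarrow> real"
  assumes fin: "finite J" and s0: "(\<Sum>a\<in>J. h a) = 0"
    and ord: "\<forall>a\<in>J. \<forall>b\<in>J. h a > 0 \<longrightarrow> h b < 0 \<longrightarrow> r b < r a"
  shows "0 \<le> (\<Sum>a\<in>J. r a * h a)"
proof (cases "\<exists>a\<in>J. h a \<noteq> 0")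
  case True thus ?thesis using block_pos[OF assms] by simp
next
  case False thus ?thesis by simp
qed

lemma avg_less:
  fixes X Y :: "nat set" and f :: "nat \<Rightarrow> real"
  assumes fX: "finite X" "X \<noteq> {}" and fY: "finite Y" "Y \<noteq> {}"
    and lt: "\<forall>x\<in>X. \<forall>y\<in>Y. f y < f x"
  shows "(\<Sum>y\<in>Y. f y) / card Y < (\<Sum>x\<in>X. f x) / card X"
proof -
  define m where "m = Min (f ` X)"
  have mle: "\<forall>x\<in>X. m \<le> f x" using fX by (auto simp: m_def)
  have "m \<in> f ` X" using Min_in[of "f ` X"] fX by (simp add: m_def)
  then obtain x1 where x1: "x1 \<in> X" "f x1 = m" by auto
  have cX: "real (card X) > 0" and cY: "real (card Y) > 0" using fX fY by (auto simp: card_gt_0_iff)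
  have "(\<Sum>y\<in>Y. f y) < (\<Sum>y\<in>Y. m)"
    using sum_strict_mono[OF fY(1) fY(2), of f "\<lambda>_. m"] lt x1 by auto
  hence 1: "(\<Sum>y\<in>Y. f y) / card Y < m" using cY by (simp add: divide_less_eq mult.commute)
  have "(\<Sum>x\<in>X. m) \<le> (\<Sum>x\<in>X. f x)" using sum_mono mle by metis
  hence 2: "m \<le> (\<Sum>x\<in>X. f x) / card X" using cX by (simp add: le_divide_eq mult.commute)
  show ?thesis using 1 2 by linarith
qed

lemma pair_sum_card:
  fixes D :: "(nat \<times> nat) set"
  assumes fin: "finite D"
  shows "(\<Sum>(x,y)\<in>D. (if c = x then 1 else 0) - (if c = y then 1 else 0) :: real)
       = real (card {y. (c,y)\<in>D}) - real (card {x. (x,c)\<in>D})"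
proof -
  have e1: "(\<Sum>p\<in>D. (if c = fst p then 1 else 0) :: real) = real (card {p\<in>D. fst p = c})"
    using sum.inter_filter[OF fin, of "\<lambda>_. 1::real" "\<lambda>p. fst p = c"] by (simp add: eq_commute)
  have e2: "(\<Sum>p\<in>D. (if c = snd p then 1 else 0) :: real) = real (card {p\<in>D. snd p = c})"
    using sum.inter_filter[OF fin, of "\<lambda>_. 1::real" "\<lambda>p. snd p = c"] by (simp add: eq_commute)
  have i1: "{p\<in>D. fst p = c} = (\<lambda>y. (c,y)) ` {y. (c,y)\<in>D}" by auto
  have i2: "{p\<in>D. snd p = c} = (\<lambda>x. (x,c)) ` {x. (x,c)\<in>D}" by auto
  have c1: "card {p\<in>D. fst p = c} = card {y. (c,y)\<in>D}" unfolding i1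
    by (rule card_image) (auto simp: inj_on_def)
  have c2: "card {p\<in>D. snd p = c} = card {x. (x,c)\<in>D}" unfolding i2
    by (rule card_image) (auto simp: inj_on_def)
  have "(\<Sum>(x,y)\<in>D. (if c = x then 1 else 0) - (if c = y then 1 else 0) :: real)
     = (\<Sum>p\<in>D. (if c = fst p then 1 else 0) - (if c = snd p then 1 else 0) :: real)"
    by (simp add: case_prod_beta)
  also have "\<dots> = (\<Sum>p\<in>D. (if c = fst p then 1 else 0)::real) - (\<Sum>p\<in>D. (if c = snd p then 1 else 0)::real)"
    by (rule sum_subtractf)
  finally show ?thesis using e1 e2 c1 c2 by simp
qed

lemma blk_mono: "x \<le> y \<Longrightarrow> blk ns x \<le> blk ns y"
  unfolding blk_def by (rule card_mono) (auto simp: cuts_def)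

lemma sum_list_pos_mem: "m \<in> set xs \<Longrightarrow> (0::nat) < m \<Longrightarrow> 0 < sum_list xs"
  using member_le_sum_list[of m xs] by simp

lemma cuts_bounds:
  assumes "is_comp n ns" "c \<in> cuts ns"
  shows "0 < c \<and> c < n"
proof -
  obtain j where j: "1 \<le> j" "j < length ns" "c = sum_list (take j ns)"
    using assms(2) by (auto simp: cuts_def)
  have pos: "\<forall>m\<in>set ns. 0 < m" using assms(1) by (simp add: is_comp_def)
  have "ns ! 0 \<in> set (take j ns)" using j by (simp add: in_set_conv_nth) (rule exI[of _ 0], auto)
  hence "0 < c" using j pos sum_list_pos_mem[of "ns ! 0" "take j ns"] by (auto dest: in_set_takeD)
  moreover have "ns ! j \<in> set (drop j ns)" using j by (simp add: Cons_nth_drop_Suc[symmetric])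
  hence "0 < sum_list (drop j ns)" using pos sum_list_pos_mem[of "ns ! j" "drop j ns"] by (auto dest: in_set_dropD)
  moreover have "sum_list ns = sum_list (take j ns) + sum_list (drop j ns)"
    by (metis append_take_drop_id sum_list_append)
  ultimately show ?thesis using assms(1) j by (simp add: is_comp_def)
qed

lemma blk_cut_lt:
  assumes "c \<in> cuts ns" "0 < c"
  shows "blk ns (c - 1) < blk ns c"
  unfolding blk_def
proof (rule psubset_card_mono)
  show "finite {x \<in> cuts ns. x \<le> c}" by (auto simp: cuts_def)
  have "c \<in> {x \<in> cuts ns. x \<le> c}" "c \<notin> {x \<in> cuts ns. x \<le> c - 1}" using assms by auto
  thus "{x \<in> cuts ns. x \<le> c - 1} \<subset> {x \<in> cuts ns. x \<le> c}" by auto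
qed

lemma blk_lt_len:
  assumes "is_comp n ns" "z < n"
  shows "blk ns z < length ns"
proof -
  have "ns \<noteq> []" using assms by (auto simp: is_comp_def)
  have "blk ns z \<le> card (cuts ns)" unfolding blk_def by (rule card_mono) (auto simp: cuts_def)
  also have "\<dots> \<le> card {1..<length ns}" unfolding cuts_def by (rule card_image_le) simp
  finally show ?thesis using \<open>ns \<noteq> []\<close> by (cases ns) auto
qed


theorem mainTheorem9:
  fixes n :: nat and P Q R rs ds :: "nat list" and w :: "nat \<Rightarrow> nat" and g :: "nat \<Rightarrow> real"
  assumes "is_comp n P"
    and "length rs = length P" and "length ds = length P"
    and "\<forall>i<length P. 0 < rs ! i \<and> 0 < ds ! i \<and> P ! i = rs ! i * ds ! i"
    and "is_comp n Q" and "is_comp n R"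
    and "psub n (blkrel Q) (blkrel R)"
    and "in_QWP n Q P w"
    and "psub n (blkrel (Ppi_comp rs ds)) (Pw_rel P Q w)"
    and "g \<in> simple_coroots n R"
    and "in_w_a0P n P w g"
  shows "pairing n (wact w (nu n P rs (Pw_rel P Q w))) g < 0"
proof -
  note compP = assms(1) and compR = assms(6)
  have rspos: "\<And>z. z < n \<Longrightarrow> 0 < rs ! blk P z"
    using assms(4) blk_lt_len[OF compP] by auto
  obtain c0 where c0: "c0 \<in> cuts R" "g = coroot n R c0"
    using assms(10) by (auto simp: simple_coroots_def)
  have c0b: "0 < c0" "c0 < n" using cuts_bounds[OF compR c0(1)] by auto
  define e :: "nat \<Rightarrow> real" where "e = (\<lambda>x. (if x = c0 - 1 then 1 else 0) - (if x = c0 then 1 else 0))"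
  have gdef: "\<And>c. g c = (\<Sum>y\<in>{y. y < n \<and> blkrel R c y}. e y) / real (card {y. y < n \<and> blkrel R c y})"
    by (simp add: c0(2) coroot_def proj_def e_def)
  have wperm: "w permutes {..<n}" using assms(8) by (simp add: in_QWP_def)
  have wlt: "\<And>a. a < n \<Longrightarrow> w a < n" using permutes_in_image[OF wperm] by simp
  have winv: "\<And>a. inv w (w a) = a" using permutes_inverses(2)[OF wperm] by simp
  have wP: "\<forall>a<n. \<forall>b<n. a < b \<and> blkrel P a b \<longrightarrow> w a < w b" using assms(8) by (simp add: in_QWP_def)
  have wmono: "\<And>a b. a < n \<Longrightarrow> b < n \<Longrightarrow> blkrel P a b \<Longrightarrow> w a < w b \<Longrightarrow> a < b"
  proof -
    fix a b assume ab: "a < n" "b < n" "blkrel P a b" "w a < w b"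
    show "a < b"
    proof (rule ccontr)
      assume "\<not> a < b"
      moreover have "a \<noteq> b" using ab by auto
      ultimately have "b < a" by simp
      hence "w b < w a" using wP ab by (auto simp: blkrel_def)
      thus False using ab by simp
    qed
  qed
  have Rmon: "\<And>x y. blk R x < blk R y \<Longrightarrow> x < y"
  proof (rule ccontr)
    fix x y assume "blk R x < blk R y" "\<not> x < y"
    hence "y \<le> x" by simp
    hence "blk R y \<le> blk R x" by (rule blk_mono)
    thus False using \<open>blk R x < blk R y\<close> by simp
  qed
  have B12: "blk R (c0 - 1) < blk R c0" using blk_cut_lt[OF c0(1) c0b(1)] .
  have QR: "\<And>x y. x < n \<Longrightarrow> y < n \<Longrightarrow> blkrel Q x y \<Longrightarrow> blk R x = blk R y"
  proof -
    fix x y assume "x < n" "y < n" "blkrel Q x y"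
    hence "blkrel R x y" using assms(7) unfolding psub_def by blast
    thus "blk R x = blk R y" by (simp add: blkrel_def)
  qed
  have cardpos: "\<And>(S::nat\<Rightarrow>nat\<Rightarrow>bool) c. c < n \<Longrightarrow> S c c \<Longrightarrow> 0 < real (card {y. y < n \<and> S c y})"
  proof -
    fix S :: "nat\<Rightarrow>nat\<Rightarrow>bool" and c assume "c < n" "S c c"
    hence "c \<in> {y. y < n \<and> S c y}" by simp
    moreover have "finite {y. y < n \<and> S c y}" by simp
    ultimately show "0 < real (card {y. y < n \<and> S c y})" by (auto simp: card_gt_0_iff)
  qed
  have gpos: "\<And>c. c < n \<Longrightarrow> 0 < g c \<Longrightarrow> blk R c = blk R (c0 - 1)"
  proof (rule ccontr)
    fix c assume c: "c < n" "0 < g c" "blk R c \<noteq> blk R (c0 - 1)"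
    have "\<forall>y\<in>{y. y < n \<and> blkrel R c y}. e y \<le> 0" using c by (auto simp: e_def blkrel_def)
    hence "(\<Sum>y\<in>{y. y < n \<and> blkrel R c y}. e y) \<le> 0" using sum_nonpos by metis
    hence "g c \<le> 0" unfolding gdef by (rule divide_nonpos_nonneg) simp
    thus False using c by simp
  qed
  have gneg: "\<And>c. c < n \<Longrightarrow> g c < 0 \<Longrightarrow> blk R c = blk R c0"
  proof (rule ccontr)
    fix c assume c: "c < n" "g c < 0" "blk R c \<noteq> blk R c0"
    have "\<forall>y\<in>{y. y < n \<and> blkrel R c y}. 0 \<le> e y" using c by (auto simp: e_def blkrel_def)
    hence "0 \<le> (\<Sum>y\<in>{y. y < n \<and> blkrel R c y}. e y)" using sum_nonneg by metis
    hence "0 \<le> g c" unfolding gdef by simp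
    thus False using c by simp
  qed
  have gc0: "0 < g (c0 - 1)"
  proof -
    let ?B = "{y. y < n \<and> blkrel R (c0 - 1) y}"
    have inB: "c0 - 1 \<in> ?B" using c0b by (simp add: blkrel_def)
    have ninB: "c0 \<notin> ?B" using B12 by (simp add: blkrel_def)
    have "(\<Sum>y\<in>?B. e y) = (\<Sum>y\<in>?B. (if y = c0 - 1 then 1 else 0)) - (\<Sum>y\<in>?B. (if y = c0 then 1 else 0))"
      unfolding e_def by (rule sum_subtractf)
    also have "\<dots> = 1" using inB ninB by simp
    finally show ?thesis unfolding gdef using cardpos[of "c0 - 1" "blkrel R"] c0b by (simp add: blkrel_def)
  qed
  define h where "h = (\<lambda>a. g (w a))"
  have hsum: "\<And>a1. a1 < n \<Longrightarrow> (\<Sum>z\<in>{z. z < n \<and> blkrel P a1 z}. h z) = 0"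
  proof -
    fix a1 assume a1: "a1 < n"
    obtain x where x: "\<forall>a<n. proj n (blkrel P) x a = 0" "\<forall>c<n. g c = wact w x c"
      using assms(11) by (auto simp: in_w_a0P_def)
    have hx: "\<And>z. z < n \<Longrightarrow> h z = x z" using x(2) wlt winv by (simp add: h_def wact_def)
    have "(\<Sum>z\<in>{z. z < n \<and> blkrel P a1 z}. x z) / real (card {z. z < n \<and> blkrel P a1 z}) = 0"
      using x(1) a1 by (simp add: proj_def)
    hence "(\<Sum>z\<in>{z. z < n \<and> blkrel P a1 z}. x z) = 0"
      using cardpos[of a1 "blkrel P"] a1 by (auto simp: blkrel_def)
    thus "(\<Sum>z\<in>{z. z < n \<and> blkrel P a1 z}. h z) = 0" using hx by simp
  qed
  define S where "S = Pw_rel P Q w"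
  define D where "D = {(x,y). x < y \<and> y < n \<and> blkrel P x y \<and> \<not> S x y}"
  define v :: "nat \<Rightarrow> real" where "v = (\<lambda>c. (1/2) * (\<Sum>(x,y)\<in>D. (if c = x then 1 else 0) - (if c = y then 1 else 0)))"
  have rho_eq: "\<And>a. rho n S (blkrel P) a = (\<Sum>y\<in>{y. y < n \<and> S a y}. v y) / real (card {y. y < n \<and> S a y})"
    by (simp add: rho_def proj_def v_def D_def)
  have finD: "finite D"
  proof (rule finite_subset)
    show "D \<subseteq> {..<n} \<times> {..<n}" by (auto simp: D_def)
  qed simp
  have vcard: "\<And>c. v c = (1/2) * (real (card {y. (c,y)\<in>D}) - real (card {x. (x,c)\<in>D}))"
    unfolding v_def using pair_sum_card[OF finD] by simp
  have vcmp: "\<And>a b. a < n \<Longrightarrow> b < n \<Longrightarrow> blkrel P a b \<Longrightarrow> blk R (w a) = blk R (c0 - 1)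
      \<Longrightarrow> blk R (w b) = blk R c0 \<Longrightarrow> v b < v a"
  proof -
    fix a b assume ab: "a < n" "b < n" "blkrel P a b" "blk R (w a) = blk R (c0 - 1)" "blk R (w b) = blk R c0"
    have wab: "w a < w b" using ab B12 Rmon by simp
    have altb: "a < b" using wmono[OF ab(1,2,3) wab] .
    have notSab: "\<not> S a b" using QR[of "w a" "w b"] wlt ab B12 by (auto simp: S_def Pw_rel_def)
    have sub1: "{y. (b,y)\<in>D} \<subset> {y. (a,y)\<in>D}"
    proof
      show "{y. (b,y)\<in>D} \<subseteq> {y. (a,y)\<in>D}"
      proof
        fix y assume "y \<in> {y. (b,y)\<in>D}"
        hence y: "b < y" "y < n" "blkrel P b y" "\<not> S b y" by (auto simp: D_def)
        have "\<not> blkrel Q (w a) (w y)"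
        proof
          assume "blkrel Q (w a) (w y)"
          hence "blk R (w y) = blk R (c0 - 1)" using QR[of "w a" "w y"] wlt ab y by simp
          hence "w y < w b" using ab B12 Rmon by simp
          hence "y < b" using wmono[OF y(2) ab(2)] y ab by (auto simp: blkrel_def)
          thus False using y by simp
        qed
        thus "y \<in> {y. (a,y)\<in>D}" using y altb ab by (auto simp: D_def S_def Pw_rel_def blkrel_def)
      qed
      have "b \<in> {y. (a,y)\<in>D}" using altb ab notSab by (auto simp: D_def)
      moreover have "b \<notin> {y. (b,y)\<in>D}" by (auto simp: D_def)
      ultimately show "{y. (b,y)\<in>D} \<noteq> {y. (a,y)\<in>D}" by blast
    qed
    have sub2: "{x. (x,a)\<in>D} \<subseteq> {x. (x,b)\<in>D}"
    proof
      fix x assume "x \<in> {x. (x,a)\<in>D}"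
      hence x: "x < a" "a < n" "blkrel P x a" "\<not> S x a" by (auto simp: D_def)
      have xn: "x < n" using x by simp
      have "\<not> blkrel Q (w x) (w b)"
      proof
        assume "blkrel Q (w x) (w b)"
        hence "blk R (w x) = blk R c0" using QR[of "w x" "w b"] wlt ab xn by simp
        hence "w a < w x" using ab B12 Rmon by simp
        hence "a < x" using wmono[OF ab(1) xn] x by (auto simp: blkrel_def)
        thus False using x by simp
      qed
      thus "x \<in> {x. (x,b)\<in>D}" using x altb ab by (auto simp: D_def S_def Pw_rel_def blkrel_def)
    qed
    have f1: "finite {y. (a,y)\<in>D}" by (rule finite_subset[of _ "{..<n}"]) (auto simp: D_def)
    have f2: "finite {x. (x,b)\<in>D}" by (rule finite_subset[of _ "{..<n}"]) (auto simp: D_def)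
    have "card {y. (b,y)\<in>D} < card {y. (a,y)\<in>D}" using psubset_card_mono[OF f1 sub1] .
    moreover have "card {x. (x,a)\<in>D} \<le> card {x. (x,b)\<in>D}" using card_mono[OF f2 sub2] .
    ultimately show "v b < v a" unfolding vcard by simp
  qed
  define rh where "rh = rho n S (blkrel P)"
  have rhocmp: "\<And>a b. a < n \<Longrightarrow> b < n \<Longrightarrow> blkrel P a b \<Longrightarrow> 0 < h a \<Longrightarrow> h b < 0 \<Longrightarrow> rh b < rh a"
  proof -
    fix a b assume ab: "a < n" "b < n" "blkrel P a b" "0 < h a" "h b < 0"
    have ra: "blk R (w a) = blk R (c0 - 1)" using gpos[of "w a"] wlt ab by (simp add: h_def)
    have rb: "blk R (w b) = blk R c0" using gneg[of "w b"] wlt ab by (simp add: h_def)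
    let ?X = "{y. y < n \<and> S a y}" and ?Y = "{y. y < n \<and> S b y}"
    have "(\<Sum>y\<in>?Y. v y) / real (card ?Y) < (\<Sum>x\<in>?X. v x) / real (card ?X)"
    proof (rule avg_less)
      show "finite ?X" "finite ?Y" by simp_all
      have "a \<in> ?X" "b \<in> ?Y" using ab by (simp_all add: S_def Pw_rel_def blkrel_def)
      thus "?X \<noteq> {}" "?Y \<noteq> {}" by blast+
      show "\<forall>x\<in>?X. \<forall>y\<in>?Y. v y < v x"
      proof (intro ballI)
        fix x y assume x: "x \<in> ?X" and y: "y \<in> ?Y"
        have "blk R (w x) = blk R (c0 - 1)" using x ra QR[of "w a" "w x"] wlt ab by (auto simp: S_def Pw_rel_def)
        moreover have "blk R (w y) = blk R c0" using y rb QR[of "w b" "w y"] wlt ab by (auto simp: S_def Pw_rel_def)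
        moreover have "blkrel P x y" using x y ab by (auto simp: S_def Pw_rel_def blkrel_def)
        ultimately show "v y < v x" using vcmp x y by auto
      qed
    qed
    thus "rh b < rh a" unfolding rh_def rho_eq .
  qed
  have nueq: "nu n P rs (Pw_rel P Q w) = (\<lambda>a. - rh a / real (rs ! blk P a))"
    by (simp add: nu_def rh_def S_def)
  define F where "F = (\<lambda>a. - rh a / real (rs ! blk P a) * h a)"
  have "pairing n (wact w (nu n P rs (Pw_rel P Q w))) g = (\<Sum>c\<in>w ` {..<n}. (\<lambda>c. - rh (inv w c) / real (rs ! blk P (inv w c)) * g c) c)"
    unfolding pairing_def wact_def nueq permutes_image[OF wperm] by simp
  also have "\<dots> = (\<Sum>a<n. F a)"
    using permutes_inj_on[OF wperm] by (simp add: sum.reindex F_def winv h_def)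
  also have "\<dots> = (\<Sum>y\<in>blk P ` {..<n}. (\<Sum>a\<in>{x. x \<in> {..<n} \<and> blk P x = y}. F a))"
    by (rule sum.group[symmetric]) auto
  also have "\<dots> < 0"
  proof -
    have blockeq: "\<And>a1. {x. x \<in> {..<n} \<and> blk P x = blk P a1} = {z. z < n \<and> blkrel P a1 z}"
      by (auto simp: blkrel_def)
    have Feq: "\<And>a1. a1 < n \<Longrightarrow> (\<Sum>a\<in>{z. z < n \<and> blkrel P a1 z}. F a)
        = - (1 / real (rs ! blk P a1)) * (\<Sum>a\<in>{z. z < n \<and> blkrel P a1 z}. rh a * h a)"
      by (simp add: sum_distrib_left F_def blkrel_def)
    have ordb: "\<And>a1. a1 < n \<Longrightarrow> \<forall>a\<in>{z. z < n \<and> blkrel P a1 z}. \<forall>b\<in>{z. z < n \<and> blkrel P a1 z}. 0 < h a \<longrightarrow> h b < 0 \<longrightarrow> rh b < rh a"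
      using rhocmp by (auto simp: blkrel_def)
    have le: "\<forall>y\<in>blk P ` {..<n}. (\<Sum>a\<in>{x. x \<in> {..<n} \<and> blk P x = y}. F a) \<le> 0"
    proof
      fix y assume "y \<in> blk P ` {..<n}"
      then obtain a1 where a1: "a1 < n" "y = blk P a1" by auto
      have "0 \<le> (\<Sum>a\<in>{z. z < n \<and> blkrel P a1 z}. rh a * h a)"
        using block_nonneg[OF _ hsum[OF a1(1)] ordb[OF a1(1)]] by simp
      moreover have "0 < real (rs ! blk P a1)" using rspos a1 by simp
      ultimately show "(\<Sum>a\<in>{x. x \<in> {..<n} \<and> blk P x = y}. F a) \<le> 0"
        unfolding a1(2) blockeq Feq[OF a1(1)] by (simp add: mult_nonneg_nonneg)
    qed
    define a0 where "a0 = inv w (c0 - 1)"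
    have a0: "a0 < n" "w a0 = c0 - 1"
      using permutes_inverses(1)[OF wperm] permutes_in_image[OF permutes_inv[OF wperm]] c0b
      by (auto simp: a0_def)
    have lt: "(\<Sum>a\<in>{x. x \<in> {..<n} \<and> blk P x = blk P a0}. F a) < 0"
    proof -
      have "\<exists>a\<in>{z. z < n \<and> blkrel P a0 z}. h a \<noteq> 0"
        using a0 gc0 by (auto simp: h_def blkrel_def intro!: bexI[of _ a0])
      hence "0 < (\<Sum>a\<in>{z. z < n \<and> blkrel P a0 z}. rh a * h a)"
        using block_pos[OF _ hsum[OF a0(1)] ordb[OF a0(1)]] by simp
      moreover have "0 < real (rs ! blk P a0)" using rspos a0 by simp
      ultimately show ?thesis unfolding blockeq Feq[OF a0(1)] by (simp add: mult_pos_pos)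
    qed
    have "(\<Sum>y\<in>blk P ` {..<n}. (\<Sum>a\<in>{x. x \<in> {..<n} \<and> blk P x = y}. F a)) < (\<Sum>y\<in>blk P ` {..<n}. 0)"
      by (rule sum_strict_mono_ex1) (use le lt a0 in auto)
    thus ?thesis by simp
  qed
  finally show ?thesis .
qed

end
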